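(* Suppose $R=0$ and $f$ satisfies the Polyak–Łojasiewicz condition with constant $\mu>0$: $\|\nabla f(x)\|^2\ge2\mu(f(x)-f^\star)$ for all $x$, with $f^\star=f(x^\star)$ for a minimizer $x^\star$ of $f$. In DIANA (i.e., EF-BV with $\nu=1$) with compressors in $\mathbb{C}(\eta,\omega)$, suppose $\lambda\in(0,1]$ is such that $r<1$, and $$0<\gamma\le\frac{1}{L+\tilde L\sqrt{\frac{r_{\mathrm{av}}}{r}}\frac1{s^\star}}.$$ For $t\ge0$ let $\Psi^t=f(x^t)-f^\star+\frac{\gamma}{2\theta^\star}\frac1n\sum_{i=1}^n\|\nabla f_i(x^t)-h_i^t\|^2$. Then for every $t\ge0$, $\mathbb{E}[\Psi^t]\le\big(\max(1-\gamma\mu,\frac{r+1}{2})\big)^t\Psi^0$.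
   Context: $f=\frac1n\sum_if_i$, each $f_i:\mathbb{R}^d\to\mathbb{R}$ convex and $L_i$-smooth; $\tilde L=\sqrt{\frac1n\sum_iL_i^2}$; $f$ is $L$-smooth with $L\le\tilde L$. For $\eta\in[0,1)$, $\omega\ge0$, $\mathbb{C}(\eta,\omega)$ is the class of randomized operators $\mathcal{C}:\mathbb{R}^d\to\mathbb{R}^d$ with $\|\mathbb{E}[\mathcal{C}(x)]-x\|\le\eta\|x\|$ and $\mathbb{E}\|\mathcal{C}(x)-\mathbb{E}[\mathcal{C}(x)]\|^2\le\omega\|x\|^2$ for all $x$. Compressors $\mathcal{C}_i^t$ all lie in $\mathbb{C}(\eta,\omega)$, those at iteration $t$ are independent of previous randomness, and $\omega_{\mathrm{av}}\in[0,\omega]$ satisfies $\mathbb{E}\|\frac1n\sum_i(\mathcal{C}_i^t(x_i)-\mathbb{E}[\mathcal{C}_i^t(x_i)])\|^2\le\frac{\omega_{\mathrm{av}}}{n}\sum_i\|x_i\|^2$ for all $t$ and $x_1,\dots,x_n$. DIANA: given $x^0,h_1^0,\dots,h_n^0$, $\gamma>0$, $\lambda\in(0,1]$, $h^0=\frac1n\sum_ih_i^0$; for $t\ge0$: $d_i^t=\mathcal{C}_i^t(\nabla f_i(x^t)-h_i^t)$, $h_i^{t+1}=h_i^t+\lambda d_i^t$, $d^t=\frac1n\sum_id_i^t$, $h^{t+1}=h^t+\lambda d^t$, $g^{t+1}=h^t+d^t$, $x^{t+1}=x^t-\gamma g^{t+1}$ (here $R=0$). Constants: $r=(1-\lambda+\lambda\eta)^2+\lambda^2\omega$,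 $r_{\mathrm{av}}=\eta^2+\omega_{\mathrm{av}}$, $s^\star=\sqrt{\frac{1+r}{2r}}-1$, $\theta^\star=s^\star(1+s^\star)\frac{r}{r_{\mathrm{av}}}$ (with $r>0$, $r_{\mathrm{av}}>0$). *)

theory Defs
  imports "HOL-Probability.Probability"
begin

text \<open>State of DIANA at iteration t: (x^t, (h_i^t)_i, h^t). The randomness used
 at iteration t is the sample w t; the compressor C_i^t is the operator
 Cop t i applied with that sample.\<close>

fun diana ::
  "nat \<Rightarrow> (nat \<Rightarrow> 'a::real_normed_vector \<Rightarrow> 'a) \<Rightarrow> (nat \<Rightarrow> nat \<Rightarrow> 'a \<Rightarrow> 'w \<Rightarrow> 'a)
   \<Rightarrow> real \<Rightarrow> real \<Rightarrow> 'a \<Rightarrow> (nat \<Rightarrow> 'a) \<Rightarrow> (nat \<Rightarrow> 'w) \<Rightarrow> nat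
   \<Rightarrow> 'a \<times> (nat \<Rightarrow> 'a) \<times> 'a" where
  "diana n gf Cop lam gam x0 h0 w 0 = (x0, h0, (1 / real n) *\<^sub>R (\<Sum>i<n. h0 i))"
| "diana n gf Cop lam gam x0 h0 w (Suc t) =
     (let (x, hs, hb) = diana n gf Cop lam gam x0 h0 w t;
          d = (\<lambda>i. Cop t i (gf i x - hs i) (w t));
          dbar = (1 / real n) *\<^sub>R (\<Sum>i<n. d i);
          g = hb + dbar
      in (x - gam *\<^sub>R g, (\<lambda>i. hs i + lam *\<^sub>R d i), hb + lam *\<^sub>R dbar))"

definition compressor_class ::
  "'m measure \<Rightarrow> ('a::euclidean_space \<Rightarrow> 'm \<Rightarrow> 'a) \<Rightarrow> real \<Rightarrow> real \<Rightarrow> bool" where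
  "compressor_class M Cx eta om \<longleftrightarrow>
     (\<forall>x. integrable M (Cx x) \<and>
          norm ((\<integral>v. Cx x v \<partial>M) - x) \<le> eta * norm x \<and>
          (\<integral>\<^sup>+ v. ennreal ((norm (Cx x v - (\<integral>u. Cx x u \<partial>M)))\<^sup>2) \<partial>M)
             \<le> ennreal (om * (norm x)\<^sup>2))"

definition s_star :: "real \<Rightarrow> real" where
  "s_star r = sqrt ((1 + r) / (2 * r)) - 1"

definition theta_star :: "real \<Rightarrow> real \<Rightarrow> real" where
  "theta_star r r_av = s_star r * (1 + s_star r) * r / r_av"

definition lyap ::
  "nat \<Rightarrow> ('a::real_normed_vector \<Rightarrow> real) \<Rightarrow> (nat \<Rightarrow> 'a \<Rightarrow> 'a) \<Rightarrow> real \<Rightarrow> real \<Rightarrow> real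
   \<Rightarrow> 'a \<times> (nat \<Rightarrow> 'a) \<times> 'a \<Rightarrow> real" where
  "lyap n f gf fstar gam theta st =
     f (fst st) - fstar
     + gam / (2 * theta) * ((1 / real n) * (\<Sum>i<n. (norm (gf i (fst st) - fst (snd st) i))\<^sup>2))"

end

theory Submission
  imports Defs "HOL-Analysis.Lipschitz"
begin

lemma young_ineq:
  fixes a b :: "'a::real_inner"
  assumes s: "s > 0"
  shows "(norm (a + b))\<^sup>2 \<le> (1 + s) * (norm a)\<^sup>2 + (1 + 1 / s) * (norm b)\<^sup>2"
proof -
  have e: "(norm (a + b))\<^sup>2 = (norm a)\<^sup>2 + 2 * (a \<bullet> b) + (norm b)\<^sup>2"
    by (simp add: power2_norm_eq_inner inner_add inner_commute)
  have "a \<bullet> b \<le> norm a * norm b" by (rule norm_cauchy_schwarz)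
  moreover have "2 * (norm a * norm b) \<le> s * (norm a)\<^sup>2 + (norm b)\<^sup>2 / s"
  proof -
    have "0 \<le> (s * norm a - norm b)\<^sup>2" by simp
    hence "2 * s * (norm a * norm b) \<le> s\<^sup>2 * (norm a)\<^sup>2 + (norm b)\<^sup>2"
      by (simp add: power2_eq_square algebra_simps)
    hence "2 * (norm a * norm b) \<le> (s\<^sup>2 * (norm a)\<^sup>2 + (norm b)\<^sup>2) / s"
      using s by (simp add: field_simps)
    also have "\<dots> = s * (norm a)\<^sup>2 + (norm b)\<^sup>2 / s" using s by (simp add: field_simps power2_eq_square)
    finally show ?thesis .
  qed
  ultimately have "(norm (a+b))\<^sup>2 \<le> (norm a)\<^sup>2 + (s*(norm a)\<^sup>2 + (norm b)\<^sup>2/s) + (norm b)\<^sup>2"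
    unfolding e by linarith
  also have "\<dots> = (1 + s) * (norm a)\<^sup>2 + (1 + 1 / s) * (norm b)\<^sup>2"
    by (simp add: algebra_simps)
  finally show ?thesis .
qed

lemma descent_lemma:
  fixes F :: "'a::real_inner \<Rightarrow> real"
  assumes d: "\<And>x. (F has_derivative (\<lambda>h. G x \<bullet> h)) (at x)"
    and lip: "\<And>x y. norm (G x - G y) \<le> L * norm (x - y)"
  shows "F y \<le> F x + G x \<bullet> (y - x) + L / 2 * (norm (y - x))\<^sup>2"
proof -
  define d where "d = y - x"
  define \<psi> where "\<psi> = (\<lambda>\<tau>::real. F (x + \<tau> *\<^sub>R d) - \<tau> * (G x \<bullet> d) - L / 2 * \<tau>\<^sup>2 * (norm d)\<^sup>2)"
  have "\<psi> 1 \<le> \<psi> 0"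
  proof (rule DERIV_nonpos_imp_nonincreasing[of 0 1 \<psi>])
    fix \<tau> :: real assume t: "0 \<le> \<tau>" "\<tau> \<le> 1"
    have c: "((\<lambda>\<tau>. x + \<tau> *\<^sub>R d) has_derivative (\<lambda>h. h *\<^sub>R d)) (at \<tau>)"
      by (auto intro!: derivative_eq_intros)
    have "((\<lambda>\<tau>. F (x + \<tau> *\<^sub>R d)) has_derivative (\<lambda>h. G (x + \<tau> *\<^sub>R d) \<bullet> (h *\<^sub>R d))) (at \<tau>)"
      using has_derivative_compose[OF c d] by (simp add: o_def)
    moreover have "(\<lambda>h. G (x + \<tau> *\<^sub>R d) \<bullet> (h *\<^sub>R d)) = (*) (G (x + \<tau> *\<^sub>R d) \<bullet> d)"
      by (rule ext) simp
    ultimately have D1: "((\<lambda>\<tau>. F (x + \<tau> *\<^sub>R d)) has_real_derivative (G (x + \<tau> *\<^sub>R d) \<bullet> d)) (at \<tau>)"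
      by (simp add: has_field_derivative_def)
    have D: "(\<psi> has_real_derivative (G (x + \<tau> *\<^sub>R d) \<bullet> d - G x \<bullet> d - L / 2 * (2 * \<tau>) * (norm d)\<^sup>2)) (at \<tau>)"
      unfolding \<psi>_def by (auto intro!: derivative_eq_intros D1)
    have "(G (x + \<tau> *\<^sub>R d) - G x) \<bullet> d \<le> norm (G (x + \<tau> *\<^sub>R d) - G x) * norm d"
      by (rule norm_cauchy_schwarz)
    also have "\<dots> \<le> (L * norm (\<tau> *\<^sub>R d)) * norm d"
      using lip[of "x + \<tau> *\<^sub>R d" x] by (intro mult_right_mono) auto
    also have "\<dots> = L * \<tau> * (norm d)\<^sup>2" using t by (simp add: power2_eq_square)
    finally have "G (x + \<tau> *\<^sub>R d) \<bullet> d - G x \<bullet> d - L / 2 * (2 * \<tau>) * (norm d)\<^sup>2 \<le> 0"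
      by (simp add: inner_diff_left)
    with D show "\<exists>y. DERIV \<psi> \<tau> :> y \<and> y \<le> 0" by blast
  qed simp
  thus ?thesis unfolding \<psi>_def d_def by (simp add: algebra_simps)
qed

lemma second_moment:
  fixes Z :: "'m \<Rightarrow> 'a::euclidean_space"
  assumes P: "prob_space M" and I: "integrable M Z" and B0: "0 \<le> B"
    and B: "(\<integral>\<^sup>+ v. ennreal ((norm (Z v - (\<integral>u. Z u \<partial>M)))\<^sup>2) \<partial>M) \<le> ennreal B"
  shows "integrable M (\<lambda>v. (norm (Z v))\<^sup>2) \<and> (\<integral>v. (norm (Z v))\<^sup>2 \<partial>M) \<le> (norm (\<integral>u. Z u \<partial>M))\<^sup>2 + B"
proof -
  interpret prob_space M by fact
  define e where "e = (\<integral>u. Z u \<partial>M)"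
  have mZ[measurable]: "Z \<in> borel_measurable M" using I by auto
  have mD: "(\<lambda>v. (norm (Z v - e))\<^sup>2) \<in> borel_measurable M" by measurable
  have fin: "(\<integral>\<^sup>+ v. ennreal (norm ((norm (Z v - e))\<^sup>2)) \<partial>M) < \<infinity>"
    using B unfolding e_def[symmetric] by (simp add: le_less_trans[OF _ ennreal_less_top])
  have iD: "integrable M (\<lambda>v. (norm (Z v - e))\<^sup>2)" by (rule integrableI_bounded[OF mD fin])
  have "ennreal (\<integral>v. (norm (Z v - e))\<^sup>2 \<partial>M) = (\<integral>\<^sup>+ v. ennreal ((norm (Z v - e))\<^sup>2) \<partial>M)"
    by (rule nn_integral_eq_integral[OF iD, symmetric]) auto
  also have "\<dots> \<le> ennreal B" using B unfolding e_def .
  finally have iDB: "(\<integral>v. (norm (Z v - e))\<^sup>2 \<partial>M) \<le> B" using B0 by (simp add: ennreal_le_iff)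
  have pw: "\<And>v. (norm (Z v))\<^sup>2 = (norm e)\<^sup>2 + 2 * (e \<bullet> (Z v - e)) + (norm (Z v - e))\<^sup>2"
  proof -
    fix v
    have "Z v = e + (Z v - e)" by simp
    hence "(norm (Z v))\<^sup>2 = (norm (e + (Z v - e)))\<^sup>2" by metis
    also have "\<dots> = (norm e)\<^sup>2 + 2 * (e \<bullet> (Z v - e)) + (norm (Z v - e))\<^sup>2"
      by (simp only: power2_norm_eq_inner inner_add inner_commute[of "Z v - e" e])
    finally show "(norm (Z v))\<^sup>2 = (norm e)\<^sup>2 + 2 * (e \<bullet> (Z v - e)) + (norm (Z v - e))\<^sup>2" .
  qed
  have iZe: "integrable M (\<lambda>v. Z v - e)" using I by auto
  have iR: "integrable M (\<lambda>v. (norm e)\<^sup>2 + 2 * (e \<bullet> (Z v - e)) + (norm (Z v - e))\<^sup>2)"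
    using iZe iD by auto
  have intZe: "(\<integral>v. Z v - e \<partial>M) = 0"
    using I by (simp add: e_def prob_space)
  have "(\<integral>v. (norm e)\<^sup>2 + 2 * (e \<bullet> (Z v - e)) + (norm (Z v - e))\<^sup>2 \<partial>M)
        = (norm e)\<^sup>2 + 2 * (e \<bullet> (\<integral>v. Z v - e \<partial>M)) + (\<integral>v. (norm (Z v - e))\<^sup>2 \<partial>M)"
    using iZe iD by (simp add: prob_space)
  also have "\<dots> \<le> (norm e)\<^sup>2 + B" using intZe iDB by simp
  finally have fin2: "(\<integral>v. (norm e)\<^sup>2 + 2 * (e \<bullet> (Z v - e)) + (norm (Z v - e))\<^sup>2 \<partial>M) \<le> (norm e)\<^sup>2 + B" .
  have eqf: "(\<lambda>v. (norm (Z v))\<^sup>2) = (\<lambda>v. (norm e)\<^sup>2 + 2 * (e \<bullet> (Z v - e)) + (norm (Z v - e))\<^sup>2)"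
    using pw by (rule ext)
  show ?thesis unfolding eqf using iR fin2 unfolding e_def by simp
qed


definition dstep ::
  "nat \<Rightarrow> (nat \<Rightarrow> 'a::real_normed_vector \<Rightarrow> 'a) \<Rightarrow> (nat \<Rightarrow> nat \<Rightarrow> 'a \<Rightarrow> 'w \<Rightarrow> 'a)
   \<Rightarrow> real \<Rightarrow> real \<Rightarrow> nat \<Rightarrow> 'a \<times> (nat \<Rightarrow> 'a) \<times> 'a \<Rightarrow> 'w \<Rightarrow> 'a \<times> (nat \<Rightarrow> 'a) \<times> 'a" where
  "dstep n gf Cop lam gam t st y =
     (let x = fst st; hs = fst (snd st); hb = snd (snd st);
          d = (\<lambda>i. Cop t i (gf i x - hs i) y);
          dbar = (1 / real n) *\<^sub>R (\<Sum>i<n. d i)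
      in (x - gam *\<^sub>R (hb + dbar), (\<lambda>i. hs i + lam *\<^sub>R d i), hb + lam *\<^sub>R dbar))"

lemma diana_Suc':
  "diana n gf Cop lam gam x0 h0 w (Suc t) = dstep n gf Cop lam gam t (diana n gf Cop lam gam x0 h0 w t) (w t)"
  by (simp add: dstep_def Let_def split: prod.split)

lemma diana_dep:
  "(\<And>k. k < t \<Longrightarrow> w k = w' k) \<Longrightarrow> diana n gf Cop lam gam x0 h0 w t = diana n gf Cop lam gam x0 h0 w' t"
  by (induction t) (simp_all add: diana_Suc')

lemma diana_inv:
  "snd (snd (diana n gf Cop lam gam x0 h0 w t)) = (1 / real n) *\<^sub>R (\<Sum>i<n. fst (snd (diana n gf Cop lam gam x0 h0 w t)) i)"
proof (induction t)
  case 0 then show ?case by simp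
next
  case (Suc t)
  show ?case
    unfolding diana_Suc' dstep_def Let_def
    by (simp add: Suc sum.distrib scaleR_add_right scaleR_sum_right[symmetric])
qed

lemma one_step_pointwise:
  fixes n :: nat and fi :: "nat \<Rightarrow> 'a::euclidean_space \<Rightarrow> real" and gf :: "nat \<Rightarrow> 'a \<Rightarrow> 'a" and Li :: "nat \<Rightarrow> real"
  defines "f \<equiv> (\<lambda>x. (1 / real n) * (\<Sum>i<n. fi i x))"
    and "gradf \<equiv> (\<lambda>x. (1 / real n) *\<^sub>R (\<Sum>i<n. gf i x))"
    and "Lt2 \<equiv> (1 / real n) * (\<Sum>i<n. (Li i)\<^sup>2)"
  assumes n: "n \<ge> 1"
    and grad: "\<And>i x. i < n \<Longrightarrow> (fi i has_derivative (\<lambda>h. gf i x \<bullet> h)) (at x)"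
    and smooth_i: "\<And>i x y. i < n \<Longrightarrow> norm (gf i x - gf i y) \<le> Li i * norm (x - y)"
    and smooth: "\<And>x y. norm (gradf x - gradf y) \<le> L * norm (x - y)"
    and hb: "hb = (1 / real n) *\<^sub>R (\<Sum>i<n. hs i)"
    and s: "s > 0" and th: "\<theta> > 0" and gam: "gam > 0"
    and cond: "gam * L + gam\<^sup>2 * ((1 + 1 / s) / \<theta>) * Lt2 \<le> 1"
  shows "lyap n f gf fstar gam \<theta> (dstep n gf Cop lam gam t (x, hs, hb) y)
     \<le> f x - fstar - gam / 2 * (norm (gradf x))\<^sup>2
       + gam / 2 * (norm ((1 / real n) *\<^sub>R (\<Sum>i<n. Cop t i (gf i x - hs i) y - (gf i x - hs i))))\<^sup>2
       + gam / (2 * \<theta>) * (1 + s) * ((1 / real n) * (\<Sum>i<n. (norm (lam *\<^sub>R Cop t i (gf i x - hs i) y - (gf i x - hs i)))\<^sup>2))"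
proof -
  define C where "C = (\<lambda>i. Cop t i (gf i x - hs i) y)"
  define v where "v = (\<lambda>i. gf i x - hs i)"
  define g where "g = hb + (1 / real n) *\<^sub>R (\<Sum>i<n. C i)"
  define x' where "x' = x - gam *\<^sub>R g"
  define N where "N = (norm g)\<^sup>2"
  define E where "E = (norm ((1 / real n) *\<^sub>R (\<Sum>i<n. C i - v i)))\<^sup>2"
  define Q where "Q = (1 / real n) * (\<Sum>i<n. (norm (lam *\<^sub>R C i - v i))\<^sup>2)"
  have st: "dstep n gf Cop lam gam t (x, hs, hb) y = (x', (\<lambda>i. hs i + lam *\<^sub>R C i), hb + lam *\<^sub>R ((1 / real n) *\<^sub>R (\<Sum>i<n. C i)))"
    by (simp add: dstep_def Let_def C_def x'_def g_def)
  have fder: "\<And>z. (f has_derivative (\<lambda>h. gradf z \<bullet> h)) (at z)"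
  proof -
    fix z
    have "(f has_derivative (\<lambda>h. (1 / real n) * (\<Sum>i<n. gf i z \<bullet> h))) (at z)"
      unfolding f_def by (intro has_derivative_mult_right has_derivative_sum grad) simp
    moreover have "(\<lambda>h. (1 / real n) * (\<Sum>i<n. gf i z \<bullet> h)) = (\<lambda>h. gradf z \<bullet> h)"
      by (rule ext) (simp add: gradf_def inner_sum_left)
    ultimately show "(f has_derivative (\<lambda>h. gradf z \<bullet> h)) (at z)" by simp
  qed
  have gmg: "g - gradf x = (1 / real n) *\<^sub>R (\<Sum>i<n. C i - v i)"
    by (simp add: g_def hb gradf_def v_def sum_subtractf scaleR_diff_right sum.distrib algebra_simps)
  have desc: "f x' \<le> f x + gradf x \<bullet> (x' - x) + L / 2 * (norm (x' - x))\<^sup>2"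
    by (rule descent_lemma[OF fder smooth])
  have pol: "(norm (g - gradf x))\<^sup>2 = N - 2 * (gradf x \<bullet> g) + (norm (gradf x))\<^sup>2"
    by (simp add: N_def power2_norm_eq_inner inner_diff inner_commute)
  have K1: "f x' \<le> f x - gam / 2 * (norm (gradf x))\<^sup>2 - gam / 2 * N + gam / 2 * E + L / 2 * gam\<^sup>2 * N"
  proof -
    have a: "gradf x \<bullet> (x' - x) = - gam * (gradf x \<bullet> g)" by (simp add: x'_def)
    have b: "(norm (x' - x))\<^sup>2 = gam\<^sup>2 * N" by (simp add: x'_def N_def power_mult_distrib)
    have "E = N - 2 * (gradf x \<bullet> g) + (norm (gradf x))\<^sup>2" using pol gmg by (simp add: E_def)
    hence "gam / 2 * E = gam / 2 * (N - 2 * (gradf x \<bullet> g) + (norm (gradf x))\<^sup>2)"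
      by simp
    hence c: "gam / 2 * E = gam / 2 * N - gam * (gradf x \<bullet> g) + gam / 2 * (norm (gradf x))\<^sup>2"
      by (simp add: algebra_simps)
    have d: "L / 2 * (gam\<^sup>2 * N) = L / 2 * gam\<^sup>2 * N" by simp
    have "f x' \<le> f x + - gam * (gradf x \<bullet> g) + L / 2 * (gam\<^sup>2 * N)"
      using desc unfolding a b .
    then show ?thesis using c d by linarith
  qed
  have K2i: "(norm (gf i x' - (hs i + lam *\<^sub>R C i)))\<^sup>2 \<le> (1 + s) * (norm (lam *\<^sub>R C i - v i))\<^sup>2 + (1 + 1 / s) * ((Li i)\<^sup>2 * (gam\<^sup>2 * N))"
    if i: "i < n" for i
  proof -
    have "gf i x' - (hs i + lam *\<^sub>R C i) = (v i - lam *\<^sub>R C i) + (gf i x' - gf i x)"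
      by (simp add: v_def)
    hence "(norm (gf i x' - (hs i + lam *\<^sub>R C i)))\<^sup>2 \<le> (1 + s) * (norm (v i - lam *\<^sub>R C i))\<^sup>2 + (1 + 1 / s) * (norm (gf i x' - gf i x))\<^sup>2"
      using young_ineq[OF s] by metis
    moreover have "norm (v i - lam *\<^sub>R C i) = norm (lam *\<^sub>R C i - v i)" by (rule norm_minus_commute)
    moreover have "(norm (gf i x' - gf i x))\<^sup>2 \<le> (Li i)\<^sup>2 * (gam\<^sup>2 * N)"
    proof -
      have a: "norm (gf i x' - gf i x) \<le> Li i * norm (x' - x)" by (rule smooth_i[OF i])
      have "(norm (gf i x' - gf i x))\<^sup>2 \<le> (Li i * norm (x' - x))\<^sup>2"
        by (rule power_mono[OF a]) simp
      also have "\<dots> = (Li i)\<^sup>2 * (gam\<^sup>2 * N)" by (simp add: x'_def N_def power_mult_distrib)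
      finally show ?thesis .
    qed
    moreover have "1 + 1 / s \<ge> 0" using s by simp
    ultimately show ?thesis
      by (smt (verit, best) mult_left_mono)
  qed
  define A2 where "A2 = (1 / real n) * (\<Sum>i<n. (norm (gf i x' - (hs i + lam *\<^sub>R C i)))\<^sup>2)"
  have K2: "A2 \<le> (1 + s) * Q + (1 + 1 / s) * Lt2 * gam\<^sup>2 * N"
  proof -
    have "(\<Sum>i<n. (norm (gf i x' - (hs i + lam *\<^sub>R C i)))\<^sup>2) \<le> (\<Sum>i<n. (1 + s) * (norm (lam *\<^sub>R C i - v i))\<^sup>2 + (1 + 1 / s) * ((Li i)\<^sup>2 * (gam\<^sup>2 * N)))"
      by (rule sum_mono) (rule K2i, simp)
    also have "\<dots> = (1 + s) * (\<Sum>i<n. (norm (lam *\<^sub>R C i - v i))\<^sup>2) + (1 + 1 / s) * (gam\<^sup>2 * N) * (\<Sum>i<n. (Li i)\<^sup>2)"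
      by (simp add: sum.distrib sum_distrib_left sum_distrib_right algebra_simps)
    finally have "A2 \<le> (1 / real n) * ((1 + s) * (\<Sum>i<n. (norm (lam *\<^sub>R C i - v i))\<^sup>2) + (1 + 1 / s) * (gam\<^sup>2 * N) * (\<Sum>i<n. (Li i)\<^sup>2))"
      unfolding A2_def by (intro mult_left_mono) auto
    also have "\<dots> = (1 + s) * Q + (1 + 1 / s) * Lt2 * gam\<^sup>2 * N"
      using n s by (simp add: Q_def Lt2_def field_simps)
    finally show ?thesis .
  qed
  have ly: "lyap n f gf fstar gam \<theta> (dstep n gf Cop lam gam t (x, hs, hb) y) = f x' - fstar + gam / (2 * \<theta>) * A2"
    by (simp add: st lyap_def A2_def)
  have c0: "gam / (2 * \<theta>) \<ge> 0" using gam th by simp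
  have K3: "gam / (2 * \<theta>) * A2 \<le> gam / (2 * \<theta>) * (1 + s) * Q + gam / (2 * \<theta>) * ((1 + 1 / s) * Lt2 * gam\<^sup>2 * N)"
  proof -
    have "gam / (2 * \<theta>) * A2 \<le> gam / (2 * \<theta>) * ((1 + s) * Q) + gam / (2 * \<theta>) * ((1 + 1 / s) * Lt2 * gam\<^sup>2 * N)"
      using mult_left_mono[OF K2 c0] by (simp add: distrib_left)
    moreover have "gam / (2 * \<theta>) * ((1 + s) * Q) = gam / (2 * \<theta>) * (1 + s) * Q" by (simp only: mult.assoc)
    ultimately show ?thesis by linarith
  qed
  have N0: "N \<ge> 0" by (simp add: N_def)
  have K4: "gam / (2 * \<theta>) * ((1 + 1 / s) * Lt2 * gam\<^sup>2 * N) - gam / 2 * N + L / 2 * gam\<^sup>2 * N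
        = gam / 2 * N * (gam * L + gam\<^sup>2 * ((1 + 1 / s) / \<theta>) * Lt2 - 1)"
    using th by (simp add: field_simps power2_eq_square)
  have K5: "gam / 2 * N * (gam * L + gam\<^sup>2 * ((1 + 1 / s) / \<theta>) * Lt2 - 1) \<le> 0"
    using gam N0 cond by (intro mult_nonneg_nonpos) auto
  have fin: "f x' - fstar + gam / (2 * \<theta>) * A2 \<le> f x - fstar - gam / 2 * (norm (gradf x))\<^sup>2 + gam / 2 * E + gam / (2 * \<theta>) * (1 + s) * Q"
    using K1 K3 K4 K5 by linarith
  show ?thesis
    unfolding ly using fin unfolding E_def Q_def C_def v_def .
qed


lemma one_step_expect:
  fixes n :: nat and fi :: "nat \<Rightarrow> 'a::euclidean_space \<Rightarrow> real" and gf :: "nat \<Rightarrow> 'a \<Rightarrow> 'a" and Li :: "nat \<Rightarrow> real"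
    and lam eta om om_av :: real and M :: "'m measure" and \<xi> :: "nat \<Rightarrow> 'm \<Rightarrow> 'w" and Cop :: "nat \<Rightarrow> nat \<Rightarrow> 'a \<Rightarrow> 'w \<Rightarrow> 'a"
  defines "f \<equiv> (\<lambda>x. (1 / real n) * (\<Sum>i<n. fi i x))"
    and "gradf \<equiv> (\<lambda>x. (1 / real n) *\<^sub>R (\<Sum>i<n. gf i x))"
    and "Lt2 \<equiv> (1 / real n) * (\<Sum>i<n. (Li i)\<^sup>2)"
    and "r \<equiv> (1 - lam + lam * eta)\<^sup>2 + lam\<^sup>2 * om"
    and "r_av \<equiv> eta\<^sup>2 + om_av"
  assumes n: "n \<ge> 1"
    and grad: "\<And>i x. i < n \<Longrightarrow> (fi i has_derivative (\<lambda>h. gf i x \<bullet> h)) (at x)"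
    and smooth_i: "\<And>i x y. i < n \<Longrightarrow> norm (gf i x - gf i y) \<le> Li i * norm (x - y)"
    and smooth: "\<And>x y. norm (gradf x - gradf y) \<le> L * norm (x - y)"
    and hb: "hb = (1 / real n) *\<^sub>R (\<Sum>i<n. hs i)"
    and s: "s > 0" and th: "\<theta> > 0" and gam: "gam > 0"
    and cond: "gam * L + gam\<^sup>2 * ((1 + 1 / s) / \<theta>) * Lt2 \<le> 1"
    and P: "prob_space M"
    and cls: "\<And>i. i < n \<Longrightarrow> compressor_class M (\<lambda>z w. Cop t i z (\<xi> t w)) eta om"
    and av: "\<And>xs :: nat \<Rightarrow> 'a.
        (\<integral>\<^sup>+ v. ennreal ((norm ((1 / real n) *\<^sub>R
             (\<Sum>i<n. Cop t i (xs i) (\<xi> t v) - (\<integral>u. Cop t i (xs i) (\<xi> t u) \<partial>M))))\<^sup>2) \<partial>M)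
          \<le> ennreal (om_av / real n * (\<Sum>i<n. (norm (xs i))\<^sup>2))"
    and eta: "0 \<le> eta" and om: "0 \<le> om" and om_av: "0 \<le> om_av"
    and lam: "0 < lam" "lam \<le> 1"
    and PL: "(norm (gradf x))\<^sup>2 \<ge> 2 * mu * (f x - fstar)"
    and fx: "fstar \<le> f x"
    and rel: "\<theta> * r_av = s * (1 + s) * r"
    and rho1: "(1 + s)\<^sup>2 * r \<le> \<rho>" and rho2: "1 - gam * mu \<le> \<rho>" and rho0: "0 \<le> \<rho>"
  shows "(\<integral>\<^sup>+ w. ennreal (lyap n f gf fstar gam \<theta> (dstep n gf Cop lam gam t (x, hs, hb) (\<xi> t w))) \<partial>M)
         \<le> ennreal (\<rho> * lyap n f gf fstar gam \<theta> (x, hs, hb))"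
proof -
  interpret prob_space M by fact
  define v where "v = (\<lambda>i. gf i x - hs i)"
  define C where "C = (\<lambda>i w. Cop t i (v i) (\<xi> t w))"
  define EC where "EC = (\<lambda>i. \<integral>w. C i w \<partial>M)"
  define G where "G = (1 / real n) * (\<Sum>i<n. (norm (v i))\<^sup>2)"
  define Q1 where "Q1 = (\<lambda>w. (norm ((1 / real n) *\<^sub>R (\<Sum>i<n. C i w - v i)))\<^sup>2)"
  define Q2 where "Q2 = (\<lambda>i w. (norm (lam *\<^sub>R C i w - v i))\<^sup>2)"
  define A where "A = f x - fstar - gam / 2 * (norm (gradf x))\<^sup>2"
  define c2 where "c2 = gam / (2 * \<theta>) * (1 + s)"
  have npos: "real n > 0" using n by simp
  have clsi: "integrable M (C i) \<and> norm (EC i - v i) \<le> eta * norm (v i) \<and>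
      (\<integral>\<^sup>+ w. ennreal ((norm (C i w - EC i))\<^sup>2) \<partial>M) \<le> ennreal (om * (norm (v i))\<^sup>2)" if "i < n" for i
    using cls[OF that] unfolding compressor_class_def C_def EC_def by blast
  have pw: "lyap n f gf fstar gam \<theta> (dstep n gf Cop lam gam t (x, hs, hb) (\<xi> t w))
      \<le> max 0 A + (gam / 2 * Q1 w + c2 * ((1 / real n) * (\<Sum>i<n. Q2 i w)))" for w
  proof -
    have "lyap n f gf fstar gam \<theta> (dstep n gf Cop lam gam t (x, hs, hb) (\<xi> t w))
      \<le> A + gam / 2 * Q1 w + c2 * ((1 / real n) * (\<Sum>i<n. Q2 i w))"
      using one_step_pointwise[of n fi gf Li L hb hs s \<theta> gam fstar Cop lam t x "\<xi> t w", OF n grad smooth_i _ hb s th gam]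
        smooth cond
      unfolding f_def gradf_def Lt2_def A_def Q1_def Q2_def c2_def C_def v_def
      by (simp add: mult.assoc)
    thus ?thesis by linarith
  qed
  have m1: "integrable M Q1 \<and> (\<integral>w. Q1 w \<partial>M) \<le> r_av * G"
  proof -
    define Z where "Z = (\<lambda>w. (1 / real n) *\<^sub>R (\<Sum>i<n. C i w - v i))"
    have iC: "\<And>i. i \<in> {..<n} \<Longrightarrow> integrable M (C i)" using clsi by auto
    have iZ: "integrable M Z" unfolding Z_def using iC by (intro integrable_scaleR_right integrable_sum integrable_diff) auto
    have EZ: "(\<integral>w. Z w \<partial>M) = (1 / real n) *\<^sub>R (\<Sum>i<n. EC i - v i)"
      unfolding Z_def EC_def using iC by (simp add: integral_sum integral_diff prob_space)
    have ZmEZ: "Z w - (\<integral>u. Z u \<partial>M) = (1 / real n) *\<^sub>R (\<Sum>i<n. Cop t i (v i) (\<xi> t w) - (\<integral>u. Cop t i (v i) (\<xi> t u) \<partial>M))" for w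
      unfolding EZ by (simp add: Z_def EC_def C_def scaleR_diff_right[symmetric] sum_subtractf)
    have B0: "0 \<le> om_av / real n * (\<Sum>i<n. (norm (v i))\<^sup>2)" using om_av by (simp add: sum_nonneg)
    have sm: "integrable M (\<lambda>w. (norm (Z w))\<^sup>2) \<and> (\<integral>w. (norm (Z w))\<^sup>2 \<partial>M) \<le> (norm (\<integral>u. Z u \<partial>M))\<^sup>2 + om_av / real n * (\<Sum>i<n. (norm (v i))\<^sup>2)"
      by (rule second_moment[OF P iZ B0]) (simp only: ZmEZ av)
    have "norm (\<integral>u. Z u \<partial>M) \<le> (1 / real n) * (\<Sum>i<n. eta * norm (v i))"
    proof -
      have "norm (\<integral>u. Z u \<partial>M) = (1 / real n) * norm (\<Sum>i<n. EC i - v i)" unfolding EZ by simp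
      also have "\<dots> \<le> (1 / real n) * (\<Sum>i<n. norm (EC i - v i))"
        by (intro mult_left_mono norm_sum) simp
      also have "\<dots> \<le> (1 / real n) * (\<Sum>i<n. eta * norm (v i))"
        using clsi by (intro mult_left_mono sum_mono) auto
      finally show ?thesis .
    qed
    hence "(norm (\<integral>u. Z u \<partial>M))\<^sup>2 \<le> ((1 / real n) * (\<Sum>i<n. eta * norm (v i)))\<^sup>2"
      by (intro power_mono) auto
    also have "\<dots> = eta\<^sup>2 * (\<Sum>i<n. norm (v i))\<^sup>2 / (real n)\<^sup>2"
      by (simp add: sum_distrib_left[symmetric] power_mult_distrib power_divide)
    also have "\<dots> \<le> eta\<^sup>2 * ((\<Sum>i<n. (norm (v i))\<^sup>2) * real n) / (real n)\<^sup>2"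
      using sum_squared_le_sum_of_squares[of "\<lambda>i. norm (v i)" "{..<n}"]
      by (intro divide_right_mono mult_left_mono) auto
    also have "\<dots> = eta\<^sup>2 * G" using npos by (simp add: G_def power2_eq_square field_simps)
    finally have e1: "(norm (\<integral>u. Z u \<partial>M))\<^sup>2 \<le> eta\<^sup>2 * G" .
    have "om_av / real n * (\<Sum>i<n. (norm (v i))\<^sup>2) = om_av * G" by (simp add: G_def)
    with sm e1 have "integrable M (\<lambda>w. (norm (Z w))\<^sup>2) \<and> (\<integral>w. (norm (Z w))\<^sup>2 \<partial>M) \<le> r_av * G"
      by (simp add: r_av_def algebra_simps)
    moreover have "Q1 = (\<lambda>w. (norm (Z w))\<^sup>2)" by (simp add: Q1_def Z_def)
    ultimately show ?thesis by simp
  qed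
  have m2: "integrable M (Q2 i) \<and> (\<integral>w. Q2 i w \<partial>M) \<le> r * (norm (v i))\<^sup>2" if i: "i < n" for i
  proof -
    define Z where "Z = (\<lambda>w. lam *\<^sub>R C i w - v i)"
    have iC: "integrable M (C i)" using clsi[OF i] by auto
    have iZ: "integrable M Z" unfolding Z_def using iC by auto
    have EZ: "(\<integral>w. Z w \<partial>M) = lam *\<^sub>R EC i - v i"
      unfolding Z_def EC_def using iC by (simp add: integral_diff prob_space)
    have mC: "C i \<in> borel_measurable M" using iC by auto
    have "(\<integral>\<^sup>+ w. ennreal ((norm (Z w - (\<integral>u. Z u \<partial>M)))\<^sup>2) \<partial>M)
        = (\<integral>\<^sup>+ w. ennreal (lam\<^sup>2) * ennreal ((norm (C i w - EC i))\<^sup>2) \<partial>M)"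
      unfolding EZ unfolding Z_def
      by (intro nn_integral_cong) (simp add: ennreal_mult[symmetric] scaleR_diff_right[symmetric] power_mult_distrib)
    also have "\<dots> = ennreal (lam\<^sup>2) * (\<integral>\<^sup>+ w. ennreal ((norm (C i w - EC i))\<^sup>2) \<partial>M)"
      by (rule nn_integral_cmult) (use mC in measurable)
    also have "\<dots> \<le> ennreal (lam\<^sup>2) * ennreal (om * (norm (v i))\<^sup>2)"
      using clsi[OF i] by (intro mult_left_mono) auto
    also have "\<dots> = ennreal (lam\<^sup>2 * om * (norm (v i))\<^sup>2)"
      by (simp add: ennreal_mult'[symmetric] mult.assoc)
    finally have B: "(\<integral>\<^sup>+ w. ennreal ((norm (Z w - (\<integral>u. Z u \<partial>M)))\<^sup>2) \<partial>M) \<le> ennreal (lam\<^sup>2 * om * (norm (v i))\<^sup>2)" .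
    have B0: "0 \<le> lam\<^sup>2 * om * (norm (v i))\<^sup>2" using om by simp
    have sm: "integrable M (\<lambda>w. (norm (Z w))\<^sup>2) \<and> (\<integral>w. (norm (Z w))\<^sup>2 \<partial>M) \<le> (norm (\<integral>u. Z u \<partial>M))\<^sup>2 + lam\<^sup>2 * om * (norm (v i))\<^sup>2"
      by (rule second_moment[OF P iZ B0 B])
    have "norm (\<integral>u. Z u \<partial>M) \<le> (1 - lam + lam * eta) * norm (v i)"
    proof -
      have "lam *\<^sub>R EC i - v i = lam *\<^sub>R (EC i - v i) - (1 - lam) *\<^sub>R v i"
        by (simp add: algebra_simps)
      hence "norm (lam *\<^sub>R EC i - v i) \<le> norm (lam *\<^sub>R (EC i - v i)) + norm ((1 - lam) *\<^sub>R v i)"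
        using norm_triangle_ineq4 by metis
      also have "\<dots> = lam * norm (EC i - v i) + (1 - lam) * norm (v i)" using lam by simp
      also have "\<dots> \<le> lam * (eta * norm (v i)) + (1 - lam) * norm (v i)"
        using clsi[OF i] lam by (intro add_right_mono mult_left_mono) auto
      finally show ?thesis unfolding EZ by (simp add: algebra_simps)
    qed
    hence "(norm (\<integral>u. Z u \<partial>M))\<^sup>2 \<le> ((1 - lam + lam * eta) * norm (v i))\<^sup>2"
      by (intro power_mono) auto
    moreover have "((1 - lam + lam * eta) * norm (v i))\<^sup>2 = (1 - lam + lam * eta)\<^sup>2 * (norm (v i))\<^sup>2"
      by (simp add: power_mult_distrib)
    moreover have "r * (norm (v i))\<^sup>2 = (1 - lam + lam * eta)\<^sup>2 * (norm (v i))\<^sup>2 + lam\<^sup>2 * om * (norm (v i))\<^sup>2"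
      by (simp add: r_def algebra_simps)
    ultimately have "integrable M (\<lambda>w. (norm (Z w))\<^sup>2) \<and> (\<integral>w. (norm (Z w))\<^sup>2 \<partial>M) \<le> r * (norm (v i))\<^sup>2"
      using sm by linarith
    moreover have "Q2 i = (\<lambda>w. (norm (Z w))\<^sup>2)" by (simp add: Q2_def Z_def)
    ultimately show ?thesis by simp
  qed
  define Bf where "Bf = (\<lambda>w. max 0 A + (gam / 2 * Q1 w + c2 * ((1 / real n) * (\<Sum>i<n. Q2 i w))))"
  have iQ2: "\<And>i. i \<in> {..<n} \<Longrightarrow> integrable M (Q2 i)" using m2 by auto
  have i1: "integrable M (\<lambda>w. gam / 2 * Q1 w)" using m1 by simp
  have i2: "integrable M (\<lambda>w. \<Sum>i<n. Q2 i w)" using iQ2 by (auto intro!: Bochner_Integration.integrable_sum)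
  have i3: "integrable M (\<lambda>w. c2 * (1 / real n * (\<Sum>i<n. Q2 i w)))" using i2 by simp
  have iB: "integrable M Bf" unfolding Bf_def using i1 i3 by simp
  have c20: "c2 \<ge> 0" using gam th s by (simp add: c2_def)
  have B0: "0 \<le> Bf w" for w
    unfolding Bf_def Q1_def Q2_def using gam c20 by (intro add_nonneg_nonneg mult_nonneg_nonneg sum_nonneg) auto
  have intB: "(\<integral>w. Bf w \<partial>M) = max 0 A + (gam / 2 * (\<integral>w. Q1 w \<partial>M) + c2 * ((1 / real n) * (\<Sum>i<n. \<integral>w. Q2 i w \<partial>M)))"
  proof -
    have "(\<integral>w. Bf w \<partial>M) = (\<integral>w. max 0 A \<partial>M) + (\<integral>w. gam / 2 * Q1 w + c2 * ((1 / real n) * (\<Sum>i<n. Q2 i w)) \<partial>M)"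
      unfolding Bf_def using i1 i3 by (intro Bochner_Integration.integral_add) auto
    also have "(\<integral>w. gam / 2 * Q1 w + c2 * ((1 / real n) * (\<Sum>i<n. Q2 i w)) \<partial>M)
       = (\<integral>w. gam / 2 * Q1 w \<partial>M) + (\<integral>w. c2 * ((1 / real n) * (\<Sum>i<n. Q2 i w)) \<partial>M)"
      using i1 i3 by (intro Bochner_Integration.integral_add) auto
    also have "(\<integral>w. c2 * ((1 / real n) * (\<Sum>i<n. Q2 i w)) \<partial>M) = c2 * ((1 / real n) * (\<integral>w. (\<Sum>i<n. Q2 i w) \<partial>M))"
      by simp
    also have "(\<integral>w. (\<Sum>i<n. Q2 i w) \<partial>M) = (\<Sum>i<n. \<integral>w. Q2 i w \<partial>M)"
      using iQ2 by (rule Bochner_Integration.integral_sum)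
    finally show ?thesis by (simp add: prob_space)
  qed
  have "(\<Sum>i<n. \<integral>w. Q2 i w \<partial>M) \<le> (\<Sum>i<n. r * (norm (v i))\<^sup>2)"
    using m2 by (intro sum_mono) auto
  hence s2: "(1 / real n) * (\<Sum>i<n. \<integral>w. Q2 i w \<partial>M) \<le> r * G"
    unfolding G_def by (simp add: sum_distrib_left[symmetric] divide_right_mono)
  have G0: "G \<ge> 0" by (simp add: G_def sum_nonneg)
  have bnd: "(\<integral>w. Bf w \<partial>M) \<le> max 0 A + (gam / 2 * (r_av * G) + c2 * (r * G))"
    unfolding intB using m1 s2 gam c20 by (intro add_left_mono add_mono mult_left_mono) auto
  have a1: "max 0 A \<le> \<rho> * (f x - fstar)"
  proof -
    have p1: "gam / 2 * (2 * mu * (f x - fstar)) \<le> gam / 2 * (norm (gradf x))\<^sup>2"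
      using PL gam by (intro mult_left_mono) auto
    have p2: "(1 - gam * mu) * (f x - fstar) = (f x - fstar) - gam / 2 * (2 * mu * (f x - fstar))"
      by (simp add: algebra_simps)
    have "A \<le> (1 - gam * mu) * (f x - fstar)" unfolding A_def using p1 p2 by linarith
    also have "\<dots> \<le> \<rho> * (f x - fstar)" using rho2 fx by (intro mult_right_mono) auto
    finally show ?thesis using rho0 fx by simp
  qed
  have a2: "gam / 2 * (r_av * G) + c2 * (r * G) \<le> \<rho> * (gam / (2 * \<theta>) * G)"
  proof -
    have "gam / 2 * (r_av * G) + c2 * (r * G) = gam / (2 * \<theta>) * G * (\<theta> * r_av + (1 + s) * r)"
      using th by (simp add: c2_def field_simps)
    also have "\<dots> = gam / (2 * \<theta>) * G * ((1 + s)\<^sup>2 * r)"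
      unfolding rel by (simp add: power2_eq_square algebra_simps)
    also have "\<dots> \<le> gam / (2 * \<theta>) * G * \<rho>"
      using rho1 gam th G0 by (intro mult_left_mono) auto
    finally show ?thesis by (simp add: mult.commute mult.left_commute)
  qed
  have ly0: "lyap n f gf fstar gam \<theta> (x, hs, hb) = f x - fstar + gam / (2 * \<theta>) * G"
    by (simp add: lyap_def G_def v_def)
  have "(\<integral>\<^sup>+ w. ennreal (lyap n f gf fstar gam \<theta> (dstep n gf Cop lam gam t (x, hs, hb) (\<xi> t w))) \<partial>M)
      \<le> (\<integral>\<^sup>+ w. ennreal (Bf w) \<partial>M)"
    by (intro nn_integral_mono ennreal_leI) (unfold Bf_def, rule pw)
  also have "\<dots> = ennreal (\<integral>w. Bf w \<partial>M)"
    by (rule nn_integral_eq_integral[OF iB]) (simp add: B0)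
  also have "\<dots> \<le> ennreal (\<rho> * lyap n f gf fstar gam \<theta> (x, hs, hb))"
    using bnd a1 a2 unfolding ly0 by (intro ennreal_leI) (simp add: algebra_simps)
  finally show ?thesis .
qed


lemma dstep_meas:
  fixes St :: "'z \<Rightarrow> 'a::euclidean_space \<times> (nat \<Rightarrow> 'a) \<times> 'a"
  assumes X: "(\<lambda>z. fst (St z)) \<in> borel_measurable N"
    and Hs: "\<And>i. i < n \<Longrightarrow> (\<lambda>z. fst (snd (St z)) i) \<in> borel_measurable N"
    and Hb: "(\<lambda>z. snd (snd (St z))) \<in> borel_measurable N"
    and Y: "Y \<in> measurable N Wt"
    and gfm: "\<And>i. i < n \<Longrightarrow> gf i \<in> borel_measurable borel"
    and Cm: "\<And>i. i < n \<Longrightarrow> (\<lambda>(x, w). Cop t i x w) \<in> borel_measurable (borel \<Otimes>\<^sub>M Wt)"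
  shows "(\<lambda>z. fst (dstep n gf Cop lam gam t (St z) (Y z))) \<in> borel_measurable N
       \<and> (\<forall>i<n. (\<lambda>z. fst (snd (dstep n gf Cop lam gam t (St z) (Y z))) i) \<in> borel_measurable N)
       \<and> (\<lambda>z. snd (snd (dstep n gf Cop lam gam t (St z) (Y z)))) \<in> borel_measurable N"
proof -
  have dm: "(\<lambda>z. Cop t i (gf i (fst (St z)) - fst (snd (St z)) i) (Y z)) \<in> borel_measurable N" if i: "i < n" for i
  proof -
    have g: "(\<lambda>z. gf i (fst (St z))) \<in> borel_measurable N"
      using measurable_compose[OF X gfm[OF i]] .
    have "(\<lambda>z. (gf i (fst (St z)) - fst (snd (St z)) i, Y z)) \<in> measurable N (borel \<Otimes>\<^sub>M Wt)"
      by (intro measurable_Pair borel_measurable_diff g Hs[OF i] Y)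
    from measurable_compose[OF this Cm[OF i]] show ?thesis by simp
  qed
  have sm: "(\<lambda>z. \<Sum>i<n. Cop t i (gf i (fst (St z)) - fst (snd (St z)) i) (Y z)) \<in> borel_measurable N"
    using dm by (intro borel_measurable_sum) auto
  show ?thesis
    unfolding dstep_def Let_def fst_conv snd_conv
    using X Hb sm dm Hs
    by (intro conjI allI impI borel_measurable_diff borel_measurable_add borel_measurable_scaleR
        borel_measurable_const) auto
qed

lemma lyap_meas:
  fixes St :: "'z \<Rightarrow> 'a::euclidean_space \<times> (nat \<Rightarrow> 'a) \<times> 'a"
  assumes X: "(\<lambda>z. fst (St z)) \<in> borel_measurable N"
    and Hs: "\<And>i. i < n \<Longrightarrow> (\<lambda>z. fst (snd (St z)) i) \<in> borel_measurable N"
    and gfm: "\<And>i. i < n \<Longrightarrow> gf i \<in> borel_measurable borel"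
    and Fm: "F \<in> borel_measurable borel"
  shows "(\<lambda>z. lyap n F gf fstar gam \<theta> (St z)) \<in> borel_measurable N"
proof -
  have g: "(\<lambda>z. gf i (fst (St z))) \<in> borel_measurable N" if i: "i < n" for i
    using measurable_compose[OF X gfm[OF i]] .
  have "(\<lambda>z. \<Sum>i<n. (norm (gf i (fst (St z)) - fst (snd (St z)) i))\<^sup>2) \<in> borel_measurable N"
    using g Hs by (intro borel_measurable_sum borel_measurable_power borel_measurable_norm borel_measurable_diff) auto
  moreover have "(\<lambda>z. F (fst (St z))) \<in> borel_measurable N" using measurable_compose[OF X Fm] .
  ultimately show ?thesis unfolding lyap_def
    by (intro borel_measurable_add borel_measurable_diff borel_measurable_times borel_measurable_const) auto
qed

lemma diana_meas:
  fixes gf :: "nat \<Rightarrow> 'a::euclidean_space \<Rightarrow> 'a" and W :: "nat \<Rightarrow> 'w measure"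
  assumes gfm: "\<And>i. i < n \<Longrightarrow> gf i \<in> borel_measurable borel"
    and Cm: "\<And>t i. i < n \<Longrightarrow> (\<lambda>(x, w). Cop t i x w) \<in> borel_measurable (borel \<Otimes>\<^sub>M W t)"
  shows "t \<le> T \<Longrightarrow> (\<lambda>w. fst (diana n gf Cop lam gam x0 h0 w t)) \<in> borel_measurable (PiM {..<T} W)
       \<and> (\<forall>i<n. (\<lambda>w. fst (snd (diana n gf Cop lam gam x0 h0 w t)) i) \<in> borel_measurable (PiM {..<T} W))
       \<and> (\<lambda>w. snd (snd (diana n gf Cop lam gam x0 h0 w t))) \<in> borel_measurable (PiM {..<T} W)"
proof (induction t)
  case 0
  then show ?case by simp
next
  case (Suc t)
  then have IH: "(\<lambda>w. fst (diana n gf Cop lam gam x0 h0 w t)) \<in> borel_measurable (PiM {..<T} W)"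
       "\<And>i. i < n \<Longrightarrow> (\<lambda>w. fst (snd (diana n gf Cop lam gam x0 h0 w t)) i) \<in> borel_measurable (PiM {..<T} W)"
       "(\<lambda>w. snd (snd (diana n gf Cop lam gam x0 h0 w t))) \<in> borel_measurable (PiM {..<T} W)"
    by auto
  have Y: "(\<lambda>w. w t) \<in> measurable (PiM {..<T} W) (W t)"
    using Suc.prems by (intro measurable_component_singleton) simp
  show ?case
    unfolding diana_Suc'
    by (rule dstep_meas[where St="\<lambda>w. diana n gf Cop lam gam x0 h0 w t" and Y="\<lambda>w. w t" and n=n and N="PiM {..<T} W" and Wt="W t" and t=t and gf=gf and Cop=Cop, OF IH(1) IH(2) IH(3) Y gfm Cm])
qed


theorem theorem4:
  fixes n :: nat
    and fi :: "nat \<Rightarrow> 'a::euclidean_space \<Rightarrow> real"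
    and gf :: "nat \<Rightarrow> 'a \<Rightarrow> 'a"
    and Li :: "nat \<Rightarrow> real"
    and L mu eta om om_av lam gam :: real
    and xstar x0 :: 'a
    and h0 :: "nat \<Rightarrow> 'a"
    and M :: "'m measure"
    and W :: "nat \<Rightarrow> 'w measure"
    and \<xi> :: "nat \<Rightarrow> 'm \<Rightarrow> 'w"
    and Cop :: "nat \<Rightarrow> nat \<Rightarrow> 'a \<Rightarrow> 'w \<Rightarrow> 'a"
  defines "f \<equiv> (\<lambda>x. (1 / real n) * (\<Sum>i<n. fi i x))"
    and "gradf \<equiv> (\<lambda>x. (1 / real n) *\<^sub>R (\<Sum>i<n. gf i x))"
    and "Ltil \<equiv> sqrt ((1 / real n) * (\<Sum>i<n. (Li i)\<^sup>2))"
    and "r \<equiv> (1 - lam + lam * eta)\<^sup>2 + lam\<^sup>2 * om"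
    and "r_av \<equiv> eta\<^sup>2 + om_av"
  assumes n_pos: "n \<ge> 1"
    and convex: "\<And>i. i < n \<Longrightarrow> convex_on UNIV (fi i)"
    and grad: "\<And>i x. i < n \<Longrightarrow> (fi i has_derivative (\<lambda>h. gf i x \<bullet> h)) (at x)"
    and smooth_i: "\<And>i x y. i < n \<Longrightarrow> norm (gf i x - gf i y) \<le> Li i * norm (x - y)"
    and smooth: "\<And>x y. norm (gradf x - gradf y) \<le> L * norm (x - y)"
    and L_le: "L \<le> Ltil"
    and minimizer: "\<And>x. f xstar \<le> f x"
    and mu_pos: "mu > 0"
    and PL: "\<And>x. (norm (gradf x))\<^sup>2 \<ge> 2 * mu * (f x - f xstar)"
    and eta: "0 \<le> eta" "eta < 1"
    and om: "0 \<le> om"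
    and om_av: "0 \<le> om_av" "om_av \<le> om"
    and prob: "prob_space M"
    and xi_meas: "\<And>t. \<xi> t \<in> measurable M (W t)"
    and indep: "prob_space.indep_vars M W \<xi> UNIV"
    and Cop_meas: "\<And>t i. i < n \<Longrightarrow>
                     (\<lambda>(x, w). Cop t i x w) \<in> borel_measurable (borel \<Otimes>\<^sub>M W t)"
    and Cop_class: "\<And>t i. i < n \<Longrightarrow>
                     compressor_class M (\<lambda>x v. Cop t i x (\<xi> t v)) eta om"
    and Cop_av: "\<And>t (xs :: nat \<Rightarrow> 'a).
        (\<integral>\<^sup>+ v. ennreal ((norm ((1 / real n) *\<^sub>R
             (\<Sum>i<n. Cop t i (xs i) (\<xi> t v) - (\<integral>u. Cop t i (xs i) (\<xi> t u) \<partial>M))))\<^sup>2) \<partial>M)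
          \<le> ennreal (om_av / real n * (\<Sum>i<n. (norm (xs i))\<^sup>2))"
    and lam: "0 < lam" "lam \<le> 1"
    and r_pos: "r > 0"
    and r_av_pos: "r_av > 0"
    and r_lt1: "r < 1"
    and gam_pos: "0 < gam"
    and gam_le: "gam \<le> 1 / (L + Ltil * sqrt (r_av / r) * (1 / s_star r))"
  shows "\<forall>t. (\<integral>\<^sup>+ v. ennreal (lyap n f gf (f xstar) gam (theta_star r r_av)
                      (diana n gf Cop lam gam x0 h0 (\<lambda>k. \<xi> k v) t)) \<partial>M)
             \<le> ennreal ((max (1 - gam * mu) ((r + 1) / 2)) ^ t *
                  lyap n f gf (f xstar) gam (theta_star r r_av)
                    (x0, h0, (1 / real n) *\<^sub>R (\<Sum>i<n. h0 i)))"
proof -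
  interpret P: prob_space M by (rule prob)
  define Lt2 where "Lt2 = (1 / real n) * (\<Sum>i<n. (Li i)\<^sup>2)"
  define s where "s = s_star r"
  define \<theta> where "\<theta> = theta_star r r_av"
  define \<rho> where "\<rho> = max (1 - gam * mu) ((r + 1) / 2)"
  define S where "S = (\<lambda>w t. diana n gf Cop lam gam x0 h0 w t)"
  define \<Psi> where "\<Psi> = (\<lambda>st. lyap n f gf (f xstar) gam \<theta> st)"
  have npos: "real n > 0" using n_pos by simp
  have Lt2_0: "Lt2 \<ge> 0" unfolding Lt2_def by (simp add: sum_nonneg)
  have Ltil_sq: "Ltil\<^sup>2 = Lt2" unfolding Ltil_def Lt2_def[symmetric] using Lt2_0 by simp
  have Ltil0: "Ltil \<ge> 0" unfolding Ltil_def using Lt2_0 unfolding Lt2_def by simp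
  obtain b :: 'a where b: "b \<in> Basis" using nonempty_Basis by blast
  have bnz: "norm b > 0" using b by (simp add: nonzero_Basis)
  have L0: "L \<ge> 0"
  proof -
    have "0 \<le> L * norm (b - 0)" using smooth[of b 0] norm_ge_zero order_trans by blast
    with bnz show ?thesis by (simp add: zero_le_mult_iff)
  qed
  have Li0: "Li i \<ge> 0" if "i < n" for i
  proof -
    have "0 \<le> Li i * norm (b - 0)" using smooth_i[OF that, of b 0] norm_ge_zero order_trans by blast
    with bnz show ?thesis by (simp add: zero_le_mult_iff)
  qed
  have q1: "(1 + r) / (2 * r) > 1" using r_pos r_lt1 by (simp add: field_simps)
  have s0: "s > 0"
  proof -
    have "1\<^sup>2 < (1 + r) / (2 * r)" using q1 by simp
    hence "1 < sqrt ((1 + r) / (2 * r))" by (rule real_less_rsqrt)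
    thus ?thesis by (simp add: s_def s_star_def)
  qed
  have s1: "(1 + s)\<^sup>2 = (1 + r) / (2 * r)"
    using q1 by (simp add: s_def s_star_def)
  have th_eq: "\<theta> = s * (1 + s) * r / r_av" by (simp add: \<theta>_def theta_star_def s_def)
  have th0: "\<theta> > 0" unfolding th_eq using s0 r_pos r_av_pos by simp
  have rel: "\<theta> * r_av = s * (1 + s) * r" unfolding th_eq using r_av_pos by simp
  have rr: "(1 + s)\<^sup>2 * r = (r + 1) / 2" unfolding s1 using r_pos by (simp add: field_simps)
  have rho1: "(1 + s)\<^sup>2 * r \<le> \<rho>" unfolding rr \<rho>_def by simp
  have rho2: "1 - gam * mu \<le> \<rho>" unfolding \<rho>_def by simp
  have rho0: "0 \<le> \<rho>" unfolding \<rho>_def using r_pos by (simp add: le_max_iff_disj)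
  have cond: "gam * L + gam\<^sup>2 * ((1 + 1 / s) / \<theta>) * Lt2 \<le> 1"
  proof -
    define a where "a = Ltil * sqrt (r_av / r) * (1 / s)"
    have a0: "a \<ge> 0" unfolding a_def using Ltil0 s0 r_pos r_av_pos by simp
    have a2: "a\<^sup>2 = Lt2 * (r_av / r) / s\<^sup>2"
      unfolding a_def using r_pos r_av_pos by (simp add: power_mult_distrib Ltil_sq power_divide)
    have gle: "gam \<le> 1 / (L + a)" using gam_le unfolding a_def s_def .
    have La: "L + a > 0"
    proof (rule ccontr)
      assume "\<not> L + a > 0"
      hence "1 / (L + a) \<le> 0" by simp
      with gle gam_pos show False by simp
    qed
    have "gam * (L + a) \<le> 1" using gle La by (simp add: field_simps)
    hence ga: "gam * a \<le> 1 - gam * L" by (simp add: algebra_simps)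
    have gl: "0 \<le> gam * L" using gam_pos L0 by simp
    have "(gam * a)\<^sup>2 \<le> (1 - gam * L)\<^sup>2"
      using ga gam_pos a0 by (intro power_mono) auto
    also have "\<dots> \<le> 1 - gam * L" using ga gl gam_pos a0
      by (simp add: power2_eq_square) (smt (verit) mult_left_le_one_le mult_nonneg_nonneg)
    finally have "(gam * a)\<^sup>2 \<le> 1 - gam * L" .
    moreover have "gam\<^sup>2 * ((1 + 1 / s) / \<theta>) * Lt2 = (gam * a)\<^sup>2"
    proof -
      have e: "r_av / (s\<^sup>2 * r) * \<theta> = 1 + 1 / s"
        unfolding th_eq using s0 r_pos r_av_pos by (simp add: field_simps power2_eq_square)
      have "(1 + 1 / s) / \<theta> = (r_av / (s\<^sup>2 * r) * \<theta>) / \<theta>" by (simp only: e)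
      also have "\<dots> = r_av / (s\<^sup>2 * r)" using th0 by simp
      finally have "(1 + 1 / s) / \<theta> = r_av / (s\<^sup>2 * r)" .
      thus ?thesis unfolding power_mult_distrib a2 by (simp add: ac_simps)
    qed
    ultimately show ?thesis by linarith
  qed
  have gfm: "gf i \<in> borel_measurable borel" if i: "i < n" for i
  proof -
    have "(Li i)-lipschitz_on UNIV (gf i)"
      by (rule lipschitz_onI) (use smooth_i[OF i] Li0[OF i] in \<open>simp_all add: dist_norm\<close>)
    hence "continuous_on UNIV (gf i)" by (rule lipschitz_on_continuous_on)
    thus ?thesis by (rule borel_measurable_continuous_onI)
  qed
  have fim: "fi i \<in> borel_measurable borel" if i: "i < n" for i
  proof -
    have "continuous_on UNIV (fi i)"
      using grad[OF i] by (intro continuous_at_imp_continuous_on) (blast intro: has_derivative_continuous)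
    thus ?thesis by (rule borel_measurable_continuous_onI)
  qed
  have fm: "f \<in> borel_measurable borel"
    unfolding f_def using fim by (intro borel_measurable_times borel_measurable_const borel_measurable_sum) auto
  have Sm: "(\<lambda>w. \<Psi> (S w t)) \<in> borel_measurable (PiM {..<t} W)" for t
  proof -
    have D: "(\<lambda>w. fst (S w t)) \<in> borel_measurable (PiM {..<t} W)
       \<and> (\<forall>i<n. (\<lambda>w. fst (snd (S w t)) i) \<in> borel_measurable (PiM {..<t} W))"
      using diana_meas[where t=t and T=t, OF gfm Cop_meas] unfolding S_def by auto
    show ?thesis unfolding \<Psi>_def
      using D by (intro lyap_meas[OF _ _ gfm fm]) auto
  qed
  have onestep: "(\<integral>\<^sup>+ v. ennreal (\<Psi> (dstep n gf Cop lam gam t st (\<xi> t v))) \<partial>M) \<le> ennreal (\<rho> * \<Psi> st)"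
    if hb: "snd (snd st) = (1 / real n) *\<^sub>R (\<Sum>i<n. fst (snd st) i)" for t st
  proof -
    obtain x hs hbb where st: "st = (x, hs, hbb)" by (cases st) auto
    have hb': "hbb = (1 / real n) *\<^sub>R (\<Sum>i<n. hs i)" using hb st by simp
    show ?thesis
      unfolding st \<Psi>_def
      using one_step_expect[where n=n and fi=fi and gf=gf and Li=Li and L=L and hb=hbb and hs=hs and s=s and \<theta>=\<theta>
          and gam=gam and M=M and t=t and \<xi>=\<xi> and Cop=Cop and eta=eta and om=om and om_av=om_av and lam=lam
          and x=x and fstar="(1 / real n) * (\<Sum>i<n. fi i xstar)" and mu=mu and \<rho>=\<rho>,
          OF n_pos grad smooth_i smooth[unfolded gradf_def] hb' s0 th0 gam_pos cond[unfolded Lt2_def] prob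
          Cop_class Cop_av eta(1) om om_av(1) lam PL[unfolded gradf_def f_def]
          minimizer[unfolded f_def] rel[unfolded r_def r_av_def] rho1[unfolded r_def] rho2 rho0]
      unfolding f_def by simp
  qed
  define I where "I = (\<lambda>t. \<integral>\<^sup>+ v. ennreal (\<Psi> (S (\<lambda>k. \<xi> k v) t)) \<partial>M)"
  have step: "I (Suc t) \<le> ennreal \<rho> * I t" for t
  proof -
    define X where "X = (\<lambda>v. restrict (\<lambda>k. \<xi> k v) {..<t})"
    define Pt where "Pt = PiM {..<t} W"
    have ind0: "P.indep_var Pt X (PiM {t} W) (\<lambda>v. restrict (\<lambda>k. \<xi> k v) {t})"
      using P.indep_var_restrict[OF indep, of "{..<t}" "{t}"] by (simp add: X_def Pt_def)
    define Y where "Y = (\<lambda>v. restrict (\<lambda>k. \<xi> k v) {t})"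
    define Pw where "Pw = PiM {t} W"
    have ind: "P.indep_var Pt X Pw Y" using ind0 unfolding Y_def Pw_def .
    have rvX: "X \<in> measurable M Pt" and rvY: "Y \<in> measurable M Pw"
      and prod: "distr M Pt X \<Otimes>\<^sub>M distr M Pw Y = distr M (Pt \<Otimes>\<^sub>M Pw) (\<lambda>v. (X v, Y v))"
      using ind unfolding P.indep_var_distribution_eq by auto
    have Yt: "Y v t = \<xi> t v" for v by (simp add: Y_def)
    define H where "H = (\<lambda>p. ennreal (\<Psi> (dstep n gf Cop lam gam t (S (fst p) t) (snd p))))"
    have Hm: "H \<in> borel_measurable (Pt \<Otimes>\<^sub>M W t)"
    proof -
      have D: "(\<lambda>w. fst (S w t)) \<in> borel_measurable Pt
         \<and> (\<forall>i<n. (\<lambda>w. fst (snd (S w t)) i) \<in> borel_measurable Pt)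
         \<and> (\<lambda>w. snd (snd (S w t))) \<in> borel_measurable Pt"
        using diana_meas[where t=t and T=t, OF gfm Cop_meas] unfolding S_def Pt_def by auto
      have D2: "(\<lambda>p. fst (S (fst p) t)) \<in> borel_measurable (Pt \<Otimes>\<^sub>M W t)
         \<and> (\<forall>i<n. (\<lambda>p. fst (snd (S (fst p) t)) i) \<in> borel_measurable (Pt \<Otimes>\<^sub>M W t))
         \<and> (\<lambda>p. snd (snd (S (fst p) t))) \<in> borel_measurable (Pt \<Otimes>\<^sub>M W t)"
        using D by (auto intro: measurable_compose[OF measurable_fst])
      have D3: "(\<lambda>p. fst (dstep n gf Cop lam gam t (S (fst p) t) (snd p))) \<in> borel_measurable (Pt \<Otimes>\<^sub>M W t)
         \<and> (\<forall>i<n. (\<lambda>p. fst (snd (dstep n gf Cop lam gam t (S (fst p) t) (snd p))) i) \<in> borel_measurable (Pt \<Otimes>\<^sub>M W t))"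
        using dstep_meas[where St="\<lambda>p. S (fst p) t" and Y=snd and n=n and N="Pt \<Otimes>\<^sub>M W t" and Wt="W t"
            and t=t and gf=gf and Cop=Cop and lam=lam and gam=gam] D2 gfm Cop_meas measurable_snd by blast
      have "(\<lambda>p. \<Psi> (dstep n gf Cop lam gam t (S (fst p) t) (snd p))) \<in> borel_measurable (Pt \<Otimes>\<^sub>M W t)"
        unfolding \<Psi>_def using D3 by (intro lyap_meas[OF _ _ gfm fm]) auto
      then show ?thesis unfolding H_def by (rule measurable_compose[OF _ measurable_ennreal])
    qed
    define H' where "H' = (\<lambda>p. H (fst p, snd p t))"
    have pm: "(\<lambda>p. (fst p, snd p t)) \<in> measurable (Pt \<Otimes>\<^sub>M Pw) (Pt \<Otimes>\<^sub>M W t)"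
      unfolding Pw_def
      by (intro measurable_Pair measurable_fst measurable_compose[OF measurable_snd measurable_component_singleton]) simp
    have Hm2: "H' \<in> borel_measurable (Pt \<Otimes>\<^sub>M Pw)"
      unfolding H'_def using measurable_compose[OF pm Hm] by simp
    have Hm': "H' \<in> borel_measurable (distr M Pt X \<Otimes>\<^sub>M distr M Pw Y)"
      unfolding prod using Hm2 by simp
    have XY: "(\<lambda>v. (X v, Y v)) \<in> measurable M (Pt \<Otimes>\<^sub>M Pw)" using rvX rvY by (rule measurable_Pair)
    have SX: "S (\<lambda>k. \<xi> k v) t = S (X v) t" for v
      unfolding S_def by (rule diana_dep) (simp add: X_def)
    interpret DY: prob_space "distr M Pw Y" by (rule P.prob_space_distr[OF rvY])
    have "I (Suc t) = (\<integral>\<^sup>+ v. H' (X v, Y v) \<partial>M)"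
      unfolding I_def H'_def H_def by (simp del: diana.simps add: S_def diana_Suc' SX[unfolded S_def] Yt)
    also have "\<dots> = (\<integral>\<^sup>+ p. H' p \<partial>distr M (Pt \<Otimes>\<^sub>M Pw) (\<lambda>v. (X v, Y v)))"
      by (rule nn_integral_distr[symmetric, OF XY]) (simp add: Hm2)
    also have "\<dots> = (\<integral>\<^sup>+ p. H' p \<partial>(distr M Pt X \<Otimes>\<^sub>M distr M Pw Y))"
      unfolding prod ..
    also have "\<dots> = (\<integral>\<^sup>+ x. \<integral>\<^sup>+ y. H' (x, y) \<partial>distr M Pw Y \<partial>distr M Pt X)"
      by (rule DY.nn_integral_fst[symmetric, OF Hm'])
    also have "\<dots> \<le> (\<integral>\<^sup>+ x. ennreal \<rho> * ennreal (\<Psi> (S x t)) \<partial>distr M Pt X)"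
    proof (rule nn_integral_mono)
      fix x assume x: "x \<in> space (distr M Pt X)"
      hence x': "x \<in> space Pt" by simp
      have Hx: "(\<lambda>y. H' (x, y)) \<in> borel_measurable Pw" by (rule measurable_Pair2[OF Hm2 x'])
      have "(\<integral>\<^sup>+ y. H' (x, y) \<partial>distr M Pw Y) = (\<integral>\<^sup>+ v. H' (x, Y v) \<partial>M)"
        by (rule nn_integral_distr[OF rvY]) (simp add: Hx)
      also have "\<dots> = (\<integral>\<^sup>+ v. H (x, \<xi> t v) \<partial>M)" by (simp add: H'_def Yt)
      also have "\<dots> \<le> ennreal (\<rho> * \<Psi> (S x t))"
        unfolding H_def fst_conv snd_conv
        by (rule onestep) (simp add: S_def diana_inv)
      also have "\<dots> = ennreal \<rho> * ennreal (\<Psi> (S x t))" using rho0 by (rule ennreal_mult')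
      finally show "(\<integral>\<^sup>+ y. H' (x, y) \<partial>distr M Pw Y) \<le> ennreal \<rho> * ennreal (\<Psi> (S x t))" .
    qed
    also have "\<dots> = ennreal \<rho> * (\<integral>\<^sup>+ x. ennreal (\<Psi> (S x t)) \<partial>distr M Pt X)"
      by (rule nn_integral_cmult) (use Sm[of t] in \<open>simp add: Pt_def\<close>)
    also have "(\<integral>\<^sup>+ x. ennreal (\<Psi> (S x t)) \<partial>distr M Pt X) = (\<integral>\<^sup>+ v. ennreal (\<Psi> (S (X v) t)) \<partial>M)"
      by (rule nn_integral_distr[OF rvX]) (use Sm[of t] in \<open>simp add: Pt_def\<close>)
    also have "\<dots> = I t" unfolding I_def SX ..
    finally show ?thesis .
  qed
  have Psi0: "S w 0 = (x0, h0, (1 / real n) *\<^sub>R (\<Sum>i<n. h0 i))" for w by (simp add: S_def)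
  have main: "I t \<le> ennreal (\<rho> ^ t * \<Psi> (x0, h0, (1 / real n) *\<^sub>R (\<Sum>i<n. h0 i)))" for t
  proof (induction t)
    case 0
    show ?case unfolding I_def Psi0 by (simp add: P.emeasure_space_1)
  next
    case (Suc t)
    have "I (Suc t) \<le> ennreal \<rho> * I t" by (rule step)
    also have "\<dots> \<le> ennreal \<rho> * ennreal (\<rho> ^ t * \<Psi> (x0, h0, (1 / real n) *\<^sub>R (\<Sum>i<n. h0 i)))"
      by (rule mult_left_mono[OF Suc]) simp
    also have "\<dots> = ennreal (\<rho> ^ Suc t * \<Psi> (x0, h0, (1 / real n) *\<^sub>R (\<Sum>i<n. h0 i)))"
      using rho0 by (simp add: ennreal_mult'[symmetric] mult.assoc)
    finally show ?case .
  qed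
  show ?thesis
    using main unfolding I_def S_def \<Psi>_def \<rho>_def \<theta>_def by blast
qed

end
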